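(* Let $G_1,\dots,G_k$ ($k>1$) be connected graphs with at least one edge each, and let $G$ be any coalescence of $G_1,\dots,G_k$. Let $f:\mathbb{R}\to\mathbb{R}$ with $f(0)=0$. Then $f[-]$ preserves positivity on $\mathcal{P}_G(\mathbb{R})$ if and only if (1) $f[-]$ preserves positivity on each $\mathcal{P}_{G_i}(\mathbb{R})$, and (2) $f$ is continuous and super-additive on $[0,\infty)$. In particular, for any $\alpha\in\mathbb{R}$, $\psi_\alpha$ (resp. $\phi_\alpha$) preserves positivity on $\mathcal{P}_G(\mathbb{R})$ if and only if it does so on $\mathcal{P}_{G_i}(\mathbb{R})$ for all $1\le i\le k$ and $\alpha\ge1$; that is, \[ \mathcal{H}^\psi_G=[1,\infty)\cap\bigcap_{i=1}^k\mathcal{H}^\psi_{G_i},\qquad \mathcal{H}^\phi_G=[1,\infty)\cap\bigcap_{i=1}^k\mathcal{H}^\phi_{G_i}. \]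
   Context: Graphs are finite and simple. A coalescence of two graphs $H_1,H_2$ is the graph obtained from their disjoint union by identifying a vertex of $H_1$ with a vertex of $H_2$; a coalescence of $G_1,\dots,G_k$ is obtained iteratively by coalescing a coalescence of $G_1,\dots,G_{i-1}$ with $G_i$. Super-additive on $[0,\infty)$ means $f(x+y)\ge f(x)+f(y)$ for $x,y\ge0$. For a graph $H$ on $\{1,\dots,n\}$, $\mathcal{P}_H(\mathbb{R})$ is the set of real symmetric PSD $n\times n$ matrices $M$ with $m_{ij}=0$ whenever $i\ne j$ and $(i,j)$ is not an edge. $f[M]=(f(m_{ij}))$; $f[-]$ preserves positivity on $\mathcal{P}_H(\mathbb{R})$ if $f[M]\in\mathcal{P}_H(\mathbb{R})$ for all $M\in\mathcal{P}_H(\mathbb{R})$. $\psi_\alpha(x)=\mathrm{sgn}(x)|x|^\alpha$, $\phi_\alpha(x)=|x|^\alpha$ ($x\ne0$), $\psi_\alpha(0)=\phi_\alpha(0)=0$; $\mathcal{H}_H^\psi$ (resp. $\mathcal{H}_H^\phi$) is the set of $\alpha\in\mathbb{R}$ such that $\psi_\alpha[-]$ (resp. $\phi_\alpha[-]$) preserves positivity on $\mathcal{P}_H(\mathbb{R})$. *)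

theory Defs
  imports Complex_Main
begin

type_synonym 'a sgraph = "'a set \<times> 'a set set"

definition verts :: "'a sgraph \<Rightarrow> 'a set" where "verts G = fst G"
definition edges :: "'a sgraph \<Rightarrow> 'a set set" where "edges G = snd G"

definition wf_graph :: "'a sgraph \<Rightarrow> bool" where
  "wf_graph G \<longleftrightarrow> finite (verts G) \<and>
     (\<forall>e\<in>edges G. \<exists>u v. u \<noteq> v \<and> u \<in> verts G \<and> v \<in> verts G \<and> e = {u, v})"

definition adj :: "'a sgraph \<Rightarrow> 'a \<Rightarrow> 'a \<Rightarrow> bool" where
  "adj G u v \<longleftrightarrow> {u, v} \<in> edges G"

definition connected_graph :: "'a sgraph \<Rightarrow> bool" where
  "connected_graph G \<longleftrightarrow> (\<forall>u\<in>verts G. \<forall>v\<in>verts G. (adj G)\<^sup>*\<^sup>* u v)"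

definition coalescence2 :: "'a sgraph \<Rightarrow> 'a sgraph \<Rightarrow> 'a sgraph \<Rightarrow> bool" where
  "coalescence2 G H1 H2 \<longleftrightarrow> (\<exists>f1 f2.
      inj_on f1 (verts H1) \<and> inj_on f2 (verts H2) \<and>
      verts G = f1 ` verts H1 \<union> f2 ` verts H2 \<and>
      card (f1 ` verts H1 \<inter> f2 ` verts H2) = 1 \<and>
      edges G = (image f1) ` edges H1 \<union> (image f2) ` edges H2)"

definition graph_iso :: "'a sgraph \<Rightarrow> 'a sgraph \<Rightarrow> bool" where
  "graph_iso G H \<longleftrightarrow> (\<exists>f. bij_betw f (verts H) (verts G) \<and> edges G = (image f) ` edges H)"

inductive coalescence :: "'a sgraph list \<Rightarrow> 'a sgraph \<Rightarrow> bool" where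
  base: "graph_iso G H \<Longrightarrow> coalescence [H] G"
| step: "coalescence Hs H \<Longrightarrow> coalescence2 G H Hk \<Longrightarrow> coalescence (Hs @ [Hk]) G"

text \<open>Real symmetric PSD matrices indexed by V (entries outside V x V are irrelevant).\<close>
definition psd_on :: "'a set \<Rightarrow> ('a \<Rightarrow> 'a \<Rightarrow> real) \<Rightarrow> bool" where
  "psd_on V M \<longleftrightarrow> (\<forall>i\<in>V. \<forall>j\<in>V. M i j = M j i) \<and>
     (\<forall>x::'a \<Rightarrow> real. 0 \<le> (\<Sum>i\<in>V. \<Sum>j\<in>V. x i * M i j * x j))"

definition in_PG :: "'a sgraph \<Rightarrow> ('a \<Rightarrow> 'a \<Rightarrow> real) \<Rightarrow> bool" where
  "in_PG G M \<longleftrightarrow> psd_on (verts G) M \<and>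
     (\<forall>i\<in>verts G. \<forall>j\<in>verts G. i \<noteq> j \<and> \<not> adj G i j \<longrightarrow> M i j = 0)"

definition preserves_pos :: "(real \<Rightarrow> real) \<Rightarrow> 'a sgraph \<Rightarrow> bool" where
  "preserves_pos f G \<longleftrightarrow> (\<forall>M. in_PG G M \<longrightarrow> in_PG G (\<lambda>i j. f (M i j)))"

definition superadditive_nonneg :: "(real \<Rightarrow> real) \<Rightarrow> bool" where
  "superadditive_nonneg f \<longleftrightarrow> (\<forall>x\<ge>0. \<forall>y\<ge>0. f (x + y) \<ge> f x + f y)"

definition psi :: "real \<Rightarrow> real \<Rightarrow> real" where
  "psi \<alpha> x = (if x = 0 then 0 else sgn x * \<bar>x\<bar> powr \<alpha>)"

definition phi :: "real \<Rightarrow> real \<Rightarrow> real" where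
  "phi \<alpha> x = (if x = 0 then 0 else \<bar>x\<bar> powr \<alpha>)"

definition H_psi :: "'a sgraph \<Rightarrow> real set" where
  "H_psi G = {\<alpha>. preserves_pos (psi \<alpha>) G}"

definition H_phi :: "'a sgraph \<Rightarrow> real set" where
  "H_phi G = {\<alpha>. preserves_pos (phi \<alpha>) G}"

end

theory Submission
  imports Defs "HOL-Analysis.Analysis"
begin

lemma sa_mono:
  fixes f :: "real \<Rightarrow> real"
  assumes nn: "\<forall>x\<ge>0. 0 \<le> f x" and sa: "superadditive_nonneg f"
    and "0 \<le> x" "x \<le> y"
  shows "f x \<le> f y"
proof -
  have "\<forall>a\<ge>0. \<forall>b\<ge>0. f a + f b \<le> f (a + b)" using sa unfolding superadditive_nonneg_def by auto
  then have "f x + f (y - x) \<le> f (x + (y - x))" using assms by (meson diff_ge_0_iff_ge)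
  moreover have "f (y - x) \<ge> 0" using nn assms by auto
  ultimately show ?thesis by simp
qed

lemma sa_nat:
  fixes f :: "real \<Rightarrow> real"
  assumes f0: "f 0 = 0" and sa: "superadditive_nonneg f" and "0 \<le> x"
  shows "real n * f x \<le> f (real n * x)"
proof (induction n)
  case 0 then show ?case using f0 by simp
next
  case (Suc n)
  have "f (real n * x + x) \<ge> f (real n * x) + f x"
    using sa assms unfolding superadditive_nonneg_def by auto
  then show ?case using Suc by (simp add: algebra_simps)
qed

lemma ratio_step:
  fixes f :: "real \<Rightarrow> real"
  assumes pos: "\<forall>t>0. f t > 0"
    and gm: "\<forall>a b m. 0 \<le> a \<longrightarrow> 0 \<le> b \<longrightarrow> 0 \<le> m \<longrightarrow> m * m = a * b \<longrightarrow> (f m)^2 \<le> f a * f b"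
    and s: "s > 0" and q: "q \<ge> 1"
  shows "f (s * q^(Suc k)) \<ge> (f (s*q) / f s) * f (s * q^k)"
proof (induction k)
  case 0
  have "f s > 0" using pos s by simp
  then show ?case by simp
next
  case (Suc k)
  define \<rho> where "\<rho> = f (s*q) / f s"
  define u where "u = f (s*q^k)"
  define v where "v = f (s*q^Suc k)"
  define w where "w = f (s*q^Suc (Suc k))"
  have qp: "q > 0" using q by simp
  have up: "u > 0" unfolding u_def using pos s qp by simp
  have vp: "v > 0" unfolding v_def using pos s qp by simp
  have ih: "\<rho> * u \<le> v" using Suc unfolding \<rho>_def u_def v_def by simp
  have "(s*q^Suc k) * (s*q^Suc k) = (s*q^k) * (s*q^Suc(Suc k))" by (simp add: algebra_simps)
  then have g: "v^2 \<le> u * w" unfolding u_def v_def w_def using gm s qp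
    by (metis less_imp_le mult_pos_pos zero_less_power)
  have "u * (\<rho> * v) \<le> v * v" using ih vp by (simp add: mult_right_mono mult.assoc[symmetric] mult.commute[of u])
  also have "\<dots> \<le> u * w" using g by (simp add: power2_eq_square)
  finally have "\<rho> * v \<le> w" using up by simp
  then show ?case unfolding \<rho>_def v_def w_def by simp
qed

lemma ratio_pow:
  fixes f :: "real \<Rightarrow> real"
  assumes pos: "\<forall>t>0. f t > 0"
    and gm: "\<forall>a b m. 0 \<le> a \<longrightarrow> 0 \<le> b \<longrightarrow> 0 \<le> m \<longrightarrow> m * m = a * b \<longrightarrow> (f m)^2 \<le> f a * f b"
    and s: "s > 0" and q: "q \<ge> 1"
  shows "(f (s*q) / f s)^k * f s \<le> f (s * q^k)"
proof (induction k)
  case 0 then show ?case by simp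
next
  case (Suc k)
  have r: "f (s*q) / f s \<ge> 0" using pos s q by (simp add: less_imp_le)
  have "(f (s*q) / f s)^Suc k * f s = (f (s*q) / f s) * ((f (s*q) / f s)^k * f s)" by simp
  also have "\<dots> \<le> (f (s*q) / f s) * f (s*q^k)" by (rule mult_left_mono[OF Suc r])
  also have "\<dots> \<le> f (s*q^Suc k)" using ratio_step[OF pos gm s q] by blast
  finally show ?case .
qed

lemma keyK:
  fixes f :: "real \<Rightarrow> real"
  assumes pos: "\<forall>t>0. f t > 0" and nn: "\<forall>x\<ge>0. 0 \<le> f x" and sa: "superadditive_nonneg f"
    and gm: "\<forall>a b m. 0 \<le> a \<longrightarrow> 0 \<le> b \<longrightarrow> 0 \<le> m \<longrightarrow> m * m = a * b \<longrightarrow> (f m)^2 \<le> f a * f b"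
    and s: "s > 0" and q: "q \<ge> 1" and qn: "q^n \<le> 2"
  shows "real n * (f (s*q) - f s) \<le> f (2 * s)"
proof -
  define \<rho> where "\<rho> = f (s*q) / f s"
  have fs: "f s > 0" using pos s by simp
  have "f s \<le> f (s*q)" using sa_mono[OF nn sa] s q by (simp add: less_imp_le)
  then have r1: "\<rho> \<ge> 1" unfolding \<rho>_def using fs by simp
  have "1 + real n * (\<rho> - 1) \<le> (1 + (\<rho> - 1))^n" using r1 by (intro Bernoulli_inequality) simp
  then have b: "1 + real n * (\<rho> - 1) \<le> \<rho>^n" by simp
  have "\<rho>^n * f s \<le> f (s*q^n)" unfolding \<rho>_def by (rule ratio_pow[OF pos gm s q])
  also have "\<dots> \<le> f (2 * s)" using sa_mono[OF nn sa] s q qn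
    by (simp add: less_imp_le)
  finally have c: "\<rho>^n * f s \<le> f (2 * s)" .
  have "(1 + real n * (\<rho> - 1)) * f s \<le> \<rho>^n * f s" using b fs by (simp add: mult_right_mono)
  then have "f s + real n * (\<rho> * f s - f s) \<le> f (2 * s)" using c by (simp add: algebra_simps)
  moreover have "\<rho> * f s = f (s*q)" unfolding \<rho>_def using fs by simp
  ultimately show ?thesis using fs by simp
qed

lemma cont_from:
  fixes f :: "real \<Rightarrow> real"
  assumes f0: "f 0 = 0" and nn: "\<forall>x\<ge>0. 0 \<le> f x" and sa: "superadditive_nonneg f"
    and gm: "\<forall>a b m. 0 \<le> a \<longrightarrow> 0 \<le> b \<longrightarrow> 0 \<le> m \<longrightarrow> m * m = a * b \<longrightarrow> (f m)^2 \<le> f a * f b"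
  shows "continuous_on {0..} f"
proof (cases "\<exists>t>0. f t = 0")
  case True
  then obtain t where t: "t > 0" "f t = 0" by blast
  have all0: "f x = 0" if x: "x \<ge> 0" for x
  proof (cases "x \<le> t")
    case True
    then have "f x \<le> f t" using sa_mono[OF nn sa] x by blast
    then show ?thesis using nn x t by force
  next
    case False
    have "x * x = t * (x * x / t)" using t by simp
    then have "(f x)^2 \<le> f t * f (x * x / t)" using gm t x False
      by (metis divide_nonneg_pos less_imp_le mult_nonneg_nonneg)
    then show ?thesis using t by simp
  qed
  have "continuous_on {0..} (\<lambda>x::real. 0::real)" by simp
  then show ?thesis by (rule continuous_on_cong[THEN iffD1, rotated 2]) (auto simp: all0)
next
  case False
  then have pos: "\<forall>t>0. f t > 0" using nn by (metis less_eq_real_def)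
  have mono: "f x \<le> f y" if "0 \<le> x" "x \<le> y" for x y using sa_mono[OF nn sa] that by blast
  show ?thesis unfolding continuous_on_iff
  proof (intro ballI allI impI)
    fix t e :: real assume t: "t \<in> {0..}" and e: "e > 0"
    show "\<exists>d>0. \<forall>x'\<in>{0..}. dist x' t < d \<longrightarrow> dist (f x') (f t) < e"
    proof (cases "t = 0")
      case True
      obtain n :: nat where n: "f 1 / e < real n" using reals_Archimedean2 by blast
      have "0 \<le> f 1 / e" using nn e by simp
      then have np: "real n > 0" using n by linarith
      have "f 1 < e * real n" using n e by (simp add: field_simps)
      show ?thesis
      proof (intro exI[of _ "1 / real n"] conjI ballI impI)
        show "0 < 1 / real n" using np by simp
        fix x' :: real assume x': "x' \<in> {0..}" "dist x' t < 1 / real n"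
        then have x0: "0 \<le> x'" "x' < 1 / real n" using True by (auto simp: dist_real_def)
        have "real n * x' \<le> 1" using x0 np by (simp add: field_simps)
        then have "real n * f x' \<le> f 1" using sa_nat[OF f0 sa x0(1), of n] mono[of "real n * x'" 1] x0 np
          by simp
        then have "real n * f x' < e * real n" using \<open>f 1 < e * real n\<close> by linarith
        then have "f x' < e" using np by (simp add: mult.commute)
        then show "dist (f x') (f t) < e" using True f0 nn x0 by (simp add: dist_real_def)
      qed
    next
      case False
      then have tp: "t > 0" using t by simp
      obtain n :: nat where n: "f (2 * t) / e < real n" using reals_Archimedean2 by blast
      have "0 \<le> f (2 * t) / e" using nn e tp by simp
      then have np: "real n > 0" using n by linarith
      then have n0: "n > 0" by simp
      have fe: "f (2 * t) / real n < e" using n e np by (simp add: field_simps)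
      define r where "r = root n 2"
      have r1: "r > 1" unfolding r_def using n0 by simp
      have rn: "r ^ n = 2" unfolding r_def using n0 by simp
      define d where "d = t * (1 - 1 / r)"
      have dp: "d > 0" unfolding d_def using r1 tp by (simp add: field_simps)
      have rr: "2 - 1 / r \<le> r"
      proof -
        have "0 \<le> (r - 1)^2" by simp
        then have "2 * r - 1 \<le> r * r" by (simp add: power2_eq_square algebra_simps)
        then show ?thesis using r1 by (simp add: field_simps)
      qed
      show ?thesis
      proof (intro exI[of _ d] conjI ballI impI)
        show "d > 0" by (rule dp)
        fix x' :: real assume x': "x' \<in> {0..}" "dist x' t < d"
        then have xd: "\<bar>x' - t\<bar> < d" by (simp add: dist_real_def)
        show "dist (f x') (f t) < e"
        proof (cases "t \<le> x'")
          case True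
          define q where "q = x' / t"
          have q1: "q \<ge> 1" unfolding q_def using True tp by simp
          have tq: "t * q = x'" unfolding q_def using tp by simp
          have "x' < t + d" using xd by simp
          also have "\<dots> = t * (2 - 1 / r)" unfolding d_def by (simp add: algebra_simps)
          also have "\<dots> \<le> t * r" using rr tp by simp
          finally have "q < r" unfolding q_def using tp by (simp add: field_simps)
          then have "q ^ n \<le> r ^ n" using q1 by (intro power_mono) auto
          then have qn: "q ^ n \<le> 2" using rn by simp
          have "real n * (f (t * q) - f t) \<le> f (2 * t)" by (rule keyK[OF pos nn sa gm tp q1 qn])
          then have "f x' - f t \<le> f (2 * t) / real n" using tq np by (simp add: field_simps)
          moreover have "f t \<le> f x'" using mono tp True by simp
          ultimately show ?thesis using fe by (simp add: dist_real_def)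
        next
          case False
          have "t - d < x'" using xd by simp
          moreover have "t - d = t / r" unfolding d_def using r1 by (simp add: field_simps)
          ultimately have xr: "t / r < x'" by simp
          have xp: "x' > 0" using xr tp r1 by (smt (verit) divide_pos_pos)
          define q where "q = t / x'"
          have q1: "q \<ge> 1" unfolding q_def using False xp by simp
          have tq: "x' * q = t" unfolding q_def using xp by simp
          have "q < r" unfolding q_def using xr xp r1 by (simp add: field_simps)
          then have "q ^ n \<le> r ^ n" using q1 by (intro power_mono) auto
          then have qn: "q ^ n \<le> 2" using rn by simp
          have "real n * (f (x' * q) - f x') \<le> f (2 * x')" by (rule keyK[OF pos nn sa gm xp q1 qn])
          moreover have "f (2 * x') \<le> f (2 * t)" using mono xp False by simp
          ultimately have "f t - f x' \<le> f (2 * t) / real n" using tq np by (simp add: field_simps)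
          moreover have "f x' \<le> f t" using mono xp False by simp
          ultimately show ?thesis using fe by (simp add: dist_real_def)
        qed
      qed
    qed
  qed
qed

definition quad :: "'a set \<Rightarrow> ('a \<Rightarrow> 'a \<Rightarrow> real) \<Rightarrow> ('a \<Rightarrow> real) \<Rightarrow> real" where
  "quad S N x = (\<Sum>i\<in>S. \<Sum>j\<in>S. x i * N i j * x j)"

lemma psd_on_quad: "psd_on V M \<longleftrightarrow> (\<forall>i\<in>V. \<forall>j\<in>V. M i j = M j i) \<and> (\<forall>x. 0 \<le> quad V M x)"
  unfolding psd_on_def quad_def by simp

lemma quad_prod: "quad S N x = (\<Sum>(i,j)\<in>S\<times>S. x i * N i j * x j)"
  unfolding quad_def by (rule sum.cartesian_product)

lemma quad_restrict:
  assumes "finite V" "S \<subseteq> V" "\<forall>i\<in>V-S. x i = 0"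
  shows "quad V N x = quad S N x"
  unfolding quad_prod
proof (rule sum.mono_neutral_right)
  show "finite (V \<times> V)" using assms by simp
  show "S \<times> S \<subseteq> V \<times> V" using assms by auto
  show "\<forall>p\<in>V \<times> V - S \<times> S. (case p of (i, j) \<Rightarrow> x i * N i j * x j) = 0" using assms by auto
qed

lemma quad_cong:
  assumes "\<forall>i\<in>S. x i = y i" "\<forall>i\<in>S. \<forall>j\<in>S. N i j = N' i j"
  shows "quad S N x = quad S N' y"
  unfolding quad_def using assms by (intro sum.cong refl) auto

lemma quad_split:
  assumes fA: "finite A" and fB: "finite B" and AB: "A \<inter> B = {c}"
    and z: "\<forall>i\<in>A-{c}. \<forall>j\<in>B-{c}. N i j = 0 \<and> N j i = 0"
  shows "quad (A \<union> B) N x = quad A N x + quad B N x - x c * N c c * x c"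
proof -
  define h where "h = (\<lambda>(i,j). x i * N i j * x j)"
  have "quad (A \<union> B) N x = sum h ((A\<union>B) \<times> (A\<union>B))" unfolding quad_prod h_def ..
  also have "\<dots> = sum h (A \<times> A \<union> B \<times> B)"
  proof (rule sum.mono_neutral_right)
    show "finite ((A\<union>B) \<times> (A\<union>B))" using fA fB by simp
    show "A \<times> A \<union> B \<times> B \<subseteq> (A\<union>B) \<times> (A\<union>B)" by auto
    show "\<forall>p\<in>(A\<union>B) \<times> (A\<union>B) - (A \<times> A \<union> B \<times> B). h p = 0"
    proof
      fix p assume p: "p \<in> (A\<union>B) \<times> (A\<union>B) - (A \<times> A \<union> B \<times> B)"
      obtain i j where ij: "p = (i,j)" by force
      have "(i \<in> A-{c} \<and> j \<in> B-{c}) \<or> (i \<in> B-{c} \<and> j \<in> A-{c})" using p ij AB by auto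
      then show "h p = 0" using z unfolding h_def ij by auto
    qed
  qed
  also have "\<dots> = sum h (A \<times> A) + sum h (B \<times> B) - sum h (A \<times> A \<inter> B \<times> B)"
    using sum.union_inter[of "A \<times> A" "B \<times> B" h] fA fB by simp
  also have "A \<times> A \<inter> B \<times> B = {(c,c)}" using AB by auto
  finally show ?thesis unfolding quad_prod h_def by simp
qed

lemma quad_diag:
  assumes "finite S" "c \<in> S"
  shows "quad S (\<lambda>i j. if i = c \<and> j = c then \<alpha> else N i j) x = quad S N x + x c * (\<alpha> - N c c) * x c"
proof -
  have "quad S (\<lambda>i j. if i = c \<and> j = c then \<alpha> else N i j) x =
    (\<Sum>p\<in>S\<times>S. (case p of (i,j) \<Rightarrow> x i * N i j * x j) + (if p = (c,c) then x c * (\<alpha> - N c c) * x c else 0))"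
    unfolding quad_prod
  proof (intro sum.cong refl)
    fix p assume "p \<in> S \<times> S"
    obtain i j where ij: "p = (i,j)" by force
    show "(case p of (i, j) \<Rightarrow> x i * (if i = c \<and> j = c then \<alpha> else N i j) * x j) =
      (case p of (i, j) \<Rightarrow> x i * N i j * x j) + (if p = (c, c) then x c * (\<alpha> - N c c) * x c else 0)"
      unfolding ij by (cases "i = c \<and> j = c") (auto simp: algebra_simps)
  qed
  also have "\<dots> = quad S N x + x c * (\<alpha> - N c c) * x c"
    unfolding sum.distrib quad_prod using assms by simp
  finally show ?thesis .
qed

lemma quad_scale: "quad S N (\<lambda>i. t * x i) = t^2 * quad S N x"
  unfolding quad_def sum_distrib_left power2_eq_square
  by (intro sum.cong refl) (simp add: algebra_simps)

lemma quad_add: "quad S (\<lambda>i j. N1 i j + N2 i j) x = quad S N1 x + quad S N2 x"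
  unfolding quad_def by (simp add: algebra_simps sum.distrib)

lemma quad_rank1: "quad S (\<lambda>i j. t * u i * u j) x = t * (\<Sum>i\<in>S. x i * u i)^2"
proof -
  have "t * (\<Sum>i\<in>S. x i * u i)^2 = t * (\<Sum>i\<in>S. \<Sum>j\<in>S. (x i * u i) * (x j * u j))"
    unfolding power2_eq_square sum_product ..
  also have "\<dots> = (\<Sum>i\<in>S. \<Sum>j\<in>S. t * ((x i * u i) * (x j * u j)))"
    by (simp add: sum_distrib_left)
  also have "\<dots> = quad S (\<lambda>i j. t * u i * u j) x"
    unfolding quad_def by (intro sum.cong refl) (simp add: algebra_simps)
  finally show ?thesis by simp
qed

lemma psd_sub:
  assumes "finite V" "psd_on V M" "S \<subseteq> V"
  shows "psd_on S M"
  unfolding psd_on_quad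
proof (intro conjI allI ballI)
  show "\<And>i j. i \<in> S \<Longrightarrow> j \<in> S \<Longrightarrow> M i j = M j i" using assms unfolding psd_on_quad by blast
  fix x :: "'a \<Rightarrow> real"
  define y where "y = (\<lambda>i. if i \<in> S then x i else 0)"
  have "quad V M y = quad S M y" using assms by (intro quad_restrict) (auto simp: y_def)
  also have "\<dots> = quad S M x" by (rule quad_cong) (auto simp: y_def)
  finally show "0 \<le> quad S M x" using assms unfolding psd_on_quad by metis
qed

lemma block:
  fixes G :: "'a sgraph" and f :: "real \<Rightarrow> real"
  assumes fA: "finite A" and fB: "finite B" and AB: "A \<inter> B = {c}"
    and VG: "verts G = A \<union> B" and EG: "edges G = E1 \<union> E2"
    and E1A: "\<forall>e\<in>E1. e \<subseteq> A" and E2B: "\<forall>e\<in>E2. e \<subseteq> B"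
    and p1: "preserves_pos f (A, E1)" and p2: "preserves_pos f (B, E2)"
    and f0: "f 0 = 0" and sa: "superadditive_nonneg f"
  shows "preserves_pos f G"
  unfolding preserves_pos_def
proof (intro allI impI)
  fix M assume inM: "in_PG G M"
  have psdM: "psd_on (A \<union> B) M" using inM VG unfolding in_PG_def by simp
  have zeroM: "\<And>i j. i \<in> A \<union> B \<Longrightarrow> j \<in> A \<union> B \<Longrightarrow> i \<noteq> j \<Longrightarrow> \<not> adj G i j \<Longrightarrow> M i j = 0"
    using inM VG unfolding in_PG_def by simp
  have symM: "\<And>i j. i \<in> A \<union> B \<Longrightarrow> j \<in> A \<union> B \<Longrightarrow> M i j = M j i"
    using psdM unfolding psd_on_quad by blast
  have quadM: "\<And>x. 0 \<le> quad (A \<union> B) M x" using psdM unfolding psd_on_quad by blast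
  have cA: "c \<in> A" and cB: "c \<in> B" using AB by auto
  have fV: "finite (A \<union> B)" using fA fB by simp
  have adjA: "adj (A, E1) i j" if "i \<in> A" "j \<in> A" "i \<noteq> j" "adj G i j" for i j
  proof -
    have "{i,j} \<in> E1 \<union> E2" using that EG unfolding adj_def by simp
    moreover have "{i,j} \<notin> E2"
    proof
      assume "{i,j} \<in> E2"
      then have "i \<in> B" "j \<in> B" using E2B by auto
      then show False using that AB by (metis IntI singletonD)
    qed
    ultimately show ?thesis unfolding adj_def edges_def by simp
  qed
  have adjB: "adj (B, E2) i j" if "i \<in> B" "j \<in> B" "i \<noteq> j" "adj G i j" for i j
  proof -
    have "{i,j} \<in> E1 \<union> E2" using that EG unfolding adj_def by simp
    moreover have "{i,j} \<notin> E1"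
    proof
      assume "{i,j} \<in> E1"
      then have "i \<in> A" "j \<in> A" using E1A by auto
      then show False using that AB by (metis IntI singletonD)
    qed
    ultimately show ?thesis unfolding adj_def edges_def by simp
  qed
  have cross: "M i j = 0 \<and> M j i = 0" if "i \<in> A - {c}" "j \<in> B - {c}" for i j
  proof -
    have ij: "i \<noteq> j" using that AB by auto
    have na: "\<not> adj G i j"
    proof
      assume "adj G i j"
      then have "{i,j} \<in> E1 \<union> E2" using EG unfolding adj_def by simp
      then show False
      proof
        assume "{i,j} \<in> E1" then have "j \<in> A" using E1A by auto
        then show False using that AB by auto
      next
        assume "{i,j} \<in> E2" then have "i \<in> B" using E2B by auto
        then show False using that AB by auto
      qed
    qed
    have "M i j = 0" using zeroM[of i j] that ij na by auto
    then show ?thesis using symM[of i j] that by auto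
  qed
  have psdA: "psd_on A M" by (rule psd_sub[OF fV psdM]) auto
  have psdB: "psd_on B M" by (rule psd_sub[OF fV psdM]) auto
  have qA0: "\<And>x. 0 \<le> quad A M x" using psdA unfolding psd_on_quad by blast
  have qB0: "\<And>x. 0 \<le> quad B M x" using psdB unfolding psd_on_quad by blast
  define m where "m = M c c"
  define qA where "qA = (\<lambda>y. quad A M (y(c:=1)))"
  define qB where "qB = (\<lambda>y. quad B M (y(c:=1)))"
  have key: "m \<le> qA y1 + qB y2" for y1 y2
  proof -
    define x where "x = (\<lambda>i. if i = c then 1 else if i \<in> A then y1 i else y2 i)"
    have "0 \<le> quad (A \<union> B) M x" by (rule quadM)
    also have "\<dots> = quad A M x + quad B M x - x c * M c c * x c"
      by (rule quad_split[OF fA fB AB]) (use cross in blast)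
    also have "quad A M x = qA y1" unfolding qA_def by (rule quad_cong) (auto simp: x_def)
    also have "quad B M x = qB y2" unfolding qB_def
      by (rule quad_cong) (use AB in \<open>auto simp: x_def\<close>)
    finally show ?thesis unfolding m_def x_def by simp
  qed
  define e0 where "e0 = (\<lambda>_::'a. 0::real)"
  have qAe: "qA e0 = m"
  proof -
    have "qA e0 = quad {c} M (e0(c:=1))" unfolding qA_def
      by (rule quad_restrict) (use fA cA in \<open>auto simp: e0_def\<close>)
    then show ?thesis by (simp add: quad_def m_def)
  qed
  have qBe: "qB e0 = m"
  proof -
    have "qB e0 = quad {c} M (e0(c:=1))" unfolding qB_def
      by (rule quad_restrict) (use fB cB in \<open>auto simp: e0_def\<close>)
    then show ?thesis by (simp add: quad_def m_def)
  qed
  define s1 where "s1 = (SUP y. m - qA y)"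
  define s2 where "s2 = (SUP y. m - qB y)"
  have bA: "bdd_above (range (\<lambda>y. m - qA y))"
    by (rule bdd_aboveI[of _ m]) (use qA0 in \<open>auto simp: qA_def\<close>)
  have bB: "bdd_above (range (\<lambda>y. m - qB y))"
    by (rule bdd_aboveI[of _ m]) (use qB0 in \<open>auto simp: qB_def\<close>)
  have s1u: "m - qA y \<le> s1" for y unfolding s1_def by (rule cSUP_upper[OF _ bA]) simp
  have s2u: "m - qB y \<le> s2" for y unfolding s2_def by (rule cSUP_upper[OF _ bB]) simp
  have s1p: "0 \<le> s1" using s1u[of e0] qAe by simp
  have s2p: "0 \<le> s2" using s2u[of e0] qBe by simp
  have s12: "s2 \<le> m - s1"
  proof -
    have "s1 \<le> m - s2" unfolding s1_def
    proof (rule cSUP_least)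
      fix y1
      have "s2 \<le> qA y1" unfolding s2_def
        proof (rule cSUP_least)
          fix y2 show "m - qB y2 \<le> qA y1" using key[of y1 y2] by simp
        qed simp
      then show "m - qA y1 \<le> m - s2" by simp
    qed simp
    then show ?thesis by simp
  qed
  define b where "b = m - s1"
  have bp: "0 \<le> b" using s12 s2p unfolding b_def by simp
  define MA where "MA = (\<lambda>i j. if i = c \<and> j = c then s1 else M i j)"
  define MB where "MB = (\<lambda>i j. if i = c \<and> j = c then b else M i j)"
  have homog: "quad S N x = (x c)^2 * quad S N (\<lambda>i. x i / x c)" if "x c \<noteq> 0" for S N x
  proof -
    have "x = (\<lambda>i. x c * (x i / x c))" using that by simp
    then have "quad S N x = quad S N (\<lambda>i. x c * (x i / x c))" by metis
    then show ?thesis by (simp only: quad_scale)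
  qed
  have inA: "in_PG (A, E1) MA"
    unfolding in_PG_def
  proof (intro conjI ballI impI)
    show "psd_on (verts (A, E1)) MA" unfolding psd_on_quad verts_def fst_conv
    proof (intro conjI ballI allI)
      show "\<And>i j. i \<in> A \<Longrightarrow> j \<in> A \<Longrightarrow> MA i j = MA j i" unfolding MA_def using symM by auto
      fix x :: "'a \<Rightarrow> real"
      have e: "quad A MA x = quad A M x + x c * (s1 - m) * x c"
        unfolding MA_def m_def by (rule quad_diag[OF fA cA])
      show "0 \<le> quad A MA x"
      proof (cases "x c = 0")
        case True then show ?thesis using e qA0[of x] by simp
      next
        case False
        define y where "y = (\<lambda>i. x i / x c)"
        have yc: "y(c:=1) = y" using False unfolding y_def by auto
        have "m - qA y \<le> s1" by (rule s1u)
        then have "0 \<le> quad A M y + (s1 - m)" unfolding qA_def yc by simp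
        then have "0 \<le> (x c)^2 * (quad A M y + (s1 - m))" by simp
        also have "\<dots> = quad A MA x" unfolding e homog[where S=A and N=M and x=x, OF False] y_def
          by (simp add: algebra_simps power2_eq_square)
        finally show ?thesis .
      qed
    qed
    fix i j assume "i \<in> verts (A, E1)" "j \<in> verts (A, E1)" "i \<noteq> j \<and> \<not> adj (A, E1) i j"
    then have "i \<in> A" "j \<in> A" "i \<noteq> j" "\<not> adj (A, E1) i j" by (auto simp: verts_def)
    then have "\<not> adj G i j" using adjA by blast
    then show "MA i j = 0" unfolding MA_def using zeroM \<open>i \<in> A\<close> \<open>j \<in> A\<close> \<open>i \<noteq> j\<close> by auto
  qed
  have inB: "in_PG (B, E2) MB"
    unfolding in_PG_def
  proof (intro conjI ballI impI)
    show "psd_on (verts (B, E2)) MB" unfolding psd_on_quad verts_def fst_conv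
    proof (intro conjI ballI allI)
      show "\<And>i j. i \<in> B \<Longrightarrow> j \<in> B \<Longrightarrow> MB i j = MB j i" unfolding MB_def using symM by auto
      fix x :: "'a \<Rightarrow> real"
      have e: "quad B MB x = quad B M x + x c * (b - m) * x c"
        unfolding MB_def m_def by (rule quad_diag[OF fB cB])
      show "0 \<le> quad B MB x"
      proof (cases "x c = 0")
        case True then show ?thesis using e qB0[of x] by simp
      next
        case False
        define y where "y = (\<lambda>i. x i / x c)"
        have yc: "y(c:=1) = y" using False unfolding y_def by auto
        have "m - qB y \<le> s2" by (rule s2u)
        then have "0 \<le> quad B M y + (b - m)" unfolding qB_def yc b_def using s12 by simp
        then have "0 \<le> (x c)^2 * (quad B M y + (b - m))" by simp
        also have "\<dots> = quad B MB x" unfolding e homog[where S=B and N=M and x=x, OF False] y_def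
          by (simp add: algebra_simps power2_eq_square)
        finally show ?thesis .
      qed
    qed
    fix i j assume "i \<in> verts (B, E2)" "j \<in> verts (B, E2)" "i \<noteq> j \<and> \<not> adj (B, E2) i j"
    then have "i \<in> B" "j \<in> B" "i \<noteq> j" "\<not> adj (B, E2) i j" by (auto simp: verts_def)
    then have "\<not> adj G i j" using adjB by blast
    then show "MB i j = 0" unfolding MB_def using zeroM \<open>i \<in> B\<close> \<open>j \<in> B\<close> \<open>i \<noteq> j\<close> by auto
  qed
  have fA': "\<And>x. 0 \<le> quad A (\<lambda>i j. f (MA i j)) x"
    using p1 inA unfolding preserves_pos_def in_PG_def psd_on_quad verts_def by auto
  have fB': "\<And>x. 0 \<le> quad B (\<lambda>i j. f (MB i j)) x"
    using p2 inB unfolding preserves_pos_def in_PG_def psd_on_quad verts_def by auto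
  have supa: "f s1 + f b \<le> f m"
  proof -
    have "f s1 + f b \<le> f (s1 + b)" using sa s1p bp unfolding superadditive_nonneg_def by blast
    then show ?thesis unfolding b_def by simp
  qed
  show "in_PG G (\<lambda>i j. f (M i j))"
    unfolding in_PG_def VG
  proof (intro conjI ballI impI)
    show "psd_on (A \<union> B) (\<lambda>i j. f (M i j))" unfolding psd_on_quad
    proof (intro conjI ballI allI)
      show "\<And>i j. i \<in> A \<union> B \<Longrightarrow> j \<in> A \<union> B \<Longrightarrow> f (M i j) = f (M j i)" using symM by metis
      fix x :: "'a \<Rightarrow> real"
      have sp: "quad (A \<union> B) (\<lambda>i j. f (M i j)) x =
          quad A (\<lambda>i j. f (M i j)) x + quad B (\<lambda>i j. f (M i j)) x - x c * f (M c c) * x c"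
        by (rule quad_split[OF fA fB AB]) (use cross f0 in simp)
      have fa: "(\<lambda>i j. f (MA i j)) = (\<lambda>i j. if i = c \<and> j = c then f s1 else f (M i j))"
        unfolding MA_def by (intro ext) simp
      have eqA: "quad A (\<lambda>i j. f (MA i j)) x = quad A (\<lambda>i j. f (M i j)) x + x c * (f s1 - f m) * x c"
        unfolding fa m_def by (rule quad_diag[OF fA cA])
      have fb: "(\<lambda>i j. f (MB i j)) = (\<lambda>i j. if i = c \<and> j = c then f b else f (M i j))"
        unfolding MB_def by (intro ext) simp
      have eqB: "quad B (\<lambda>i j. f (MB i j)) x = quad B (\<lambda>i j. f (M i j)) x + x c * (f b - f m) * x c"
        unfolding fb m_def by (rule quad_diag[OF fB cB])
      have "quad (A \<union> B) (\<lambda>i j. f (M i j)) x =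
        quad A (\<lambda>i j. f (MA i j)) x + quad B (\<lambda>i j. f (MB i j)) x + (x c)^2 * (f m - f s1 - f b)"
        unfolding sp eqA eqB m_def by (simp add: algebra_simps power2_eq_square)
      moreover have "0 \<le> (x c)^2 * (f m - f s1 - f b)" using supa by simp
      ultimately show "0 \<le> quad (A \<union> B) (\<lambda>i j. f (M i j)) x" using fA'[of x] fB'[of x] by linarith
    qed
    fix i j assume "i \<in> A \<union> B" "j \<in> A \<union> B" "i \<noteq> j \<and> \<not> adj G i j"
    then show "f (M i j) = 0" using zeroM f0 by auto
  qed
qed

lemma quad_restrictN:
  assumes "finite V" "S \<subseteq> V" "\<forall>i j. i \<notin> S \<or> j \<notin> S \<longrightarrow> N i j = 0"
  shows "quad V N x = quad S N x"
  unfolding quad_prod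
proof (rule sum.mono_neutral_right)
  show "finite (V \<times> V)" using assms by simp
  show "S \<times> S \<subseteq> V \<times> V" using assms by auto
  show "\<forall>p\<in>V \<times> V - S \<times> S. (case p of (i, j) \<Rightarrow> x i * N i j * x j) = 0"
  proof
    fix p assume p: "p \<in> V \<times> V - S \<times> S"
    obtain i j where ij: "p = (i,j)" by force
    have "i \<notin> S \<or> j \<notin> S" using p ij by auto
    then have "N i j = 0" using assms(3) by blast
    then show "(case p of (i, j) \<Rightarrow> x i * N i j * x j) = 0" using ij by simp
  qed
qed

lemma quad_reindex:
  assumes "inj_on g S"
  shows "quad (g ` S) N x = quad S (\<lambda>u v. N (g u) (g v)) (\<lambda>u. x (g u))"
  unfolding quad_def using assms by (simp add: sum.reindex)

lemma emb:
  fixes G H :: "'a sgraph" and g :: "'a \<Rightarrow> 'a"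
  assumes fG: "finite (verts G)" and pG: "preserves_pos f G" and f0: "f 0 = 0"
    and inj: "inj_on g (verts H)" and sub: "g ` verts H \<subseteq> verts G"
    and ed: "\<forall>e\<in>edges H. g ` e \<in> edges G"
  shows "preserves_pos f H"
  unfolding preserves_pos_def
proof (intro allI impI)
  fix M assume inH: "in_PG H M"
  define VH where "VH = verts H"
  define ig where "ig = inv_into VH g"
  have igg: "\<And>u. u \<in> VH \<Longrightarrow> ig (g u) = u" unfolding ig_def VH_def
    by (rule inv_into_f_f[OF inj])
  have psdH: "psd_on VH M" and zH: "\<forall>i\<in>VH. \<forall>j\<in>VH. i \<noteq> j \<and> \<not> adj H i j \<longrightarrow> M i j = 0"
    using inH unfolding in_PG_def VH_def by auto
  have symM: "\<And>i j. i \<in> VH \<Longrightarrow> j \<in> VH \<Longrightarrow> M i j = M j i"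
    using psdH unfolding psd_on_quad by auto
  have qM: "\<And>x. 0 \<le> quad VH M x" using psdH unfolding psd_on_quad by auto
  have zM: "\<And>i j. i \<in> VH \<Longrightarrow> j \<in> VH \<Longrightarrow> i \<noteq> j \<Longrightarrow> \<not> adj H i j \<Longrightarrow> M i j = 0"
    using zH by auto
  define M' where "M' = (\<lambda>i j. if i \<in> g ` VH \<and> j \<in> g ` VH then M (ig i) (ig j) else 0)"
  have inj': "inj_on g VH" using inj unfolding VH_def .
  have sub': "g ` VH \<subseteq> verts G" using sub unfolding VH_def .
  have M'g: "\<And>u v. u \<in> VH \<Longrightarrow> v \<in> VH \<Longrightarrow> M' (g u) (g v) = M u v"
  proof -
    fix u v assume uv: "u \<in> VH" "v \<in> VH"
    then have "g u \<in> g ` VH" "g v \<in> g ` VH" by auto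
    then show "M' (g u) (g v) = M u v" unfolding M'_def using igg uv by simp
  qed
  have adjG: "adj G (g u) (g v)" if "u \<in> VH" "v \<in> VH" "adj H u v" for u v
  proof -
    have "{u,v} \<in> edges H" using that unfolding adj_def by simp
    then have "g ` {u,v} \<in> edges G" using ed by blast
    then show ?thesis unfolding adj_def by simp
  qed
  have inG: "in_PG G M'"
    unfolding in_PG_def psd_on_quad
  proof (intro conjI ballI allI impI)
    fix i j assume "i \<in> verts G" "j \<in> verts G"
    show "M' i j = M' j i"
    proof (cases "i \<in> g ` VH \<and> j \<in> g ` VH")
      case True
      have "ig i \<in> VH" unfolding ig_def by (rule inv_into_into) (use True in blast)
      moreover have "ig j \<in> VH" unfolding ig_def by (rule inv_into_into) (use True in blast)
      ultimately have "M (ig i) (ig j) = M (ig j) (ig i)" by (rule symM)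
      moreover have "M' i j = M (ig i) (ig j)" unfolding M'_def using True by simp
      moreover have "M' j i = M (ig j) (ig i)" unfolding M'_def using True by simp
      ultimately show ?thesis by simp
    next
      case False
      then have F2: "\<not> (j \<in> g ` VH \<and> i \<in> g ` VH)" by blast
      have "M' i j = 0" unfolding M'_def by (rule if_not_P[OF False])
      moreover have "M' j i = 0" unfolding M'_def by (rule if_not_P[OF F2])
      ultimately show ?thesis by simp
    qed
  next
    fix x :: "'a \<Rightarrow> real"
    have "quad (verts G) M' x = quad (g ` VH) M' x"
    proof (rule quad_restrictN[OF fG sub'])
      show "\<forall>i j. i \<notin> g ` VH \<or> j \<notin> g ` VH \<longrightarrow> M' i j = 0"
      proof (intro allI impI)
        fix i j assume "i \<notin> g ` VH \<or> j \<notin> g ` VH"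
        then have "\<not> (i \<in> g ` VH \<and> j \<in> g ` VH)" by blast
        then show "M' i j = 0" unfolding M'_def by (rule if_not_P)
      qed
    qed
    also have "\<dots> = quad VH (\<lambda>u v. M' (g u) (g v)) (\<lambda>u. x (g u))" by (rule quad_reindex[OF inj'])
    also have "\<dots> = quad VH M (\<lambda>u. x (g u))" by (rule quad_cong) (auto simp: M'g)
    finally show "0 \<le> quad (verts G) M' x" using qM by simp
  next
    fix i j assume ij: "i \<in> verts G" "j \<in> verts G" "i \<noteq> j \<and> \<not> adj G i j"
    show "M' i j = 0"
    proof (cases "i \<in> g ` VH \<and> j \<in> g ` VH")
      case True
      then obtain u v where uv: "u \<in> VH" "v \<in> VH" "i = g u" "j = g v" by blast
      have "u \<noteq> v" using ij uv by auto
      moreover have "\<not> adj H u v" using adjG uv ij by blast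
      ultimately have "M u v = 0" using zM uv by blast
      then show ?thesis using M'g uv by simp
    next
      case False
      show ?thesis unfolding M'_def by (rule if_not_P[OF False])
    qed
  qed
  then have "in_PG G (\<lambda>i j. f (M' i j))" using pG unfolding preserves_pos_def by blast
  then have "psd_on (verts G) (\<lambda>i j. f (M' i j))" unfolding in_PG_def by blast
  then have fG': "\<And>y. 0 \<le> quad (verts G) (\<lambda>i j. f (M' i j)) y"
    unfolding psd_on_quad by blast
  show "in_PG H (\<lambda>i j. f (M i j))"
    unfolding in_PG_def psd_on_quad
  proof (intro conjI ballI allI impI)
    fix i j assume "i \<in> verts H" "j \<in> verts H"
    then show "f (M i j) = f (M j i)" using symM[unfolded VH_def] by simp
  next
    fix x :: "'a \<Rightarrow> real"
    define y where "y = (\<lambda>i. if i \<in> g ` VH then x (ig i) else 0)"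
    have "quad (verts G) (\<lambda>i j. f (M' i j)) y = quad (g ` VH) (\<lambda>i j. f (M' i j)) y"
      by (rule quad_restrict[OF fG sub']) (auto simp: y_def)
    also have "\<dots> = quad VH (\<lambda>u v. f (M' (g u) (g v))) (\<lambda>u. y (g u))" by (rule quad_reindex[OF inj'])
    also have "\<dots> = quad VH (\<lambda>i j. f (M i j)) x" by (rule quad_cong) (auto simp: M'g y_def igg)
    finally have "0 \<le> quad VH (\<lambda>i j. f (M i j)) x" using fG'[of y] by simp
    then show "0 \<le> quad (verts H) (\<lambda>i j. f (M i j)) x" unfolding VH_def .
  next
    fix i j assume "i \<in> verts H" "j \<in> verts H" "i \<noteq> j \<and> \<not> adj H i j"
    then have "M i j = 0" using zM[unfolded VH_def] by blast
    then show "f (M i j) = 0" using f0 by simp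
  qed
qed

lemma wf_finite: "wf_graph G \<Longrightarrow> finite (verts G)"
  unfolding wf_graph_def by (rule conjunct1)

lemma wf_edge: "wf_graph G \<Longrightarrow> e \<in> edges G \<Longrightarrow> \<exists>u v. u \<noteq> v \<and> u \<in> verts G \<and> v \<in> verts G \<and> e = {u, v}"
  unfolding wf_graph_def by (elim conjE) (rule bspec)

lemma img_pres:
  fixes G H :: "'a sgraph" and g :: "'a \<Rightarrow> 'a"
  assumes fH: "finite (verts H)" and eH: "\<forall>e\<in>edges H. e \<subseteq> verts H"
    and inj: "inj_on g (verts H)" and pH: "preserves_pos f H" and f0: "f 0 = 0"
    and vG: "verts G = g ` verts H" and eG: "edges G = image g ` edges H"
  shows "preserves_pos f G"
proof (rule emb[OF fH pH f0])
  show "inj_on (inv_into (verts H) g) (verts G)" unfolding vG by (rule inj_on_inv_into) simp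
  show "inv_into (verts H) g ` verts G \<subseteq> verts H" unfolding vG by (intro image_subsetI inv_into_into)
  show "\<forall>e\<in>edges G. inv_into (verts H) g ` e \<in> edges H"
  proof
    fix e assume "e \<in> edges G"
    then obtain e0 where e0: "e0 \<in> edges H" "e = g ` e0" using eG by auto
    then have "e0 \<subseteq> verts H" using eH by blast
    then have "inv_into (verts H) g ` g ` e0 = e0" by (rule inv_into_image_cancel[OF inj])
    then show "inv_into (verts H) g ` e \<in> edges H" using e0 by simp
  qed
qed

lemma wf_from:
  fixes G :: "'a sgraph"
  assumes "finite (verts G)"
    and "\<forall>e\<in>edges G. \<exists>u v. u \<noteq> v \<and> u \<in> verts G \<and> v \<in> verts G \<and> e = {u, v}"
  shows "wf_graph G" unfolding wf_graph_def using assms by blast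

lemma wf_imgE:
  assumes "wf_graph H" "inj_on g (verts H)" "e \<in> image g ` edges H"
  shows "\<exists>u v. u \<noteq> v \<and> u \<in> g ` verts H \<and> v \<in> g ` verts H \<and> e = {u, v}"
proof -
  obtain e0 where e0: "e0 \<in> edges H" "e = g ` e0" using assms(3) by (rule imageE)
  then obtain u v where uv: "u \<noteq> v" "u \<in> verts H" "v \<in> verts H" "e0 = {u,v}"
    using wf_edge[OF assms(1) e0(1)] by (elim exE conjE) (rule that; assumption)
  have "g u \<noteq> g v" using uv assms(2) by (simp add: inj_on_eq_iff)
  moreover have "e = {g u, g v}" using e0 uv by simp
  ultimately show ?thesis using uv by blast
qed

lemma coal_wf:
  assumes "coalescence Hs G" "\<forall>H\<in>set Hs. wf_graph H"
  shows "wf_graph G"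
  using assms
proof (induction rule: coalescence.induct)
  case (base G H)
  from base.hyps[unfolded graph_iso_def] obtain g where g: "bij_betw g (verts H) (verts G)" "edges G = image g ` edges H"
    by (elim exE conjE) (rule that; assumption)
  have wH: "wf_graph H" using base.prems by simp
  have vG: "verts G = g ` verts H" using bij_betw_imp_surj_on[OF g(1)] by simp
  have inj: "inj_on g (verts H)" using bij_betw_imp_inj_on[OF g(1)] .
  show ?case
  proof (rule wf_from)
    have "finite (verts H)" using wH by (rule wf_finite)
    then show "finite (verts G)" using vG by simp
    show "\<forall>e\<in>edges G. \<exists>u v. u \<noteq> v \<and> u \<in> verts G \<and> v \<in> verts G \<and> e = {u, v}"
    proof
      fix e assume "e \<in> edges G"
      then have eI: "e \<in> image g ` edges H" using g(2) by simp
      obtain u v where "u \<noteq> v" "u \<in> g ` verts H" "v \<in> g ` verts H" "e = {u, v}"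
        using wf_imgE[OF wH inj eI] by (elim exE conjE) (rule that; assumption)
      then show "\<exists>u v. u \<noteq> v \<and> u \<in> verts G \<and> v \<in> verts G \<and> e = {u, v}"
        using vG by (intro exI[of _ u] exI[of _ v]) simp
    qed
  qed
next
  case (step Hs H G Hk)
  have wH: "wf_graph H" using step.IH step.prems by simp
  have wK: "wf_graph Hk" using step.prems by simp
  from step.hyps(2)[unfolded coalescence2_def] obtain f1 f2 where c: "inj_on f1 (verts H)" "inj_on f2 (verts Hk)"
    "verts G = f1 ` verts H \<union> f2 ` verts Hk"
    "edges G = (image f1) ` edges H \<union> (image f2) ` edges Hk"
    by (elim exE conjE) (rule that; assumption)
  show ?case
  proof (rule wf_from)
    have "finite (verts H)" "finite (verts Hk)" using wH wK by (simp_all add: wf_finite)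
    then show "finite (verts G)" using c(3) by simp
    show "\<forall>e\<in>edges G. \<exists>u v. u \<noteq> v \<and> u \<in> verts G \<and> v \<in> verts G \<and> e = {u, v}"
    proof
      fix e assume "e \<in> edges G"
      then have "e \<in> image f1 ` edges H \<or> e \<in> image f2 ` edges Hk" using c by simp
      then show "\<exists>u v. u \<noteq> v \<and> u \<in> verts G \<and> v \<in> verts G \<and> e = {u, v}"
      proof
        assume eI: "e \<in> image f1 ` edges H"
        obtain u v where "u \<noteq> v" "u \<in> f1 ` verts H" "v \<in> f1 ` verts H" "e = {u, v}"
          using wf_imgE[OF wH c(1) eI] by (elim exE conjE) (rule that; assumption)
        then show ?thesis using c(3) by (intro exI[of _ u] exI[of _ v]) simp
      next
        assume eI: "e \<in> image f2 ` edges Hk"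
        obtain u v where "u \<noteq> v" "u \<in> f2 ` verts Hk" "v \<in> f2 ` verts Hk" "e = {u, v}"
          using wf_imgE[OF wK c(2) eI] by (elim exE conjE) (rule that; assumption)
        then show ?thesis using c(3) by (intro exI[of _ u] exI[of _ v]) simp
      qed
    qed
  qed
qed

definition noiso :: "'a sgraph \<Rightarrow> bool" where
  "noiso H \<longleftrightarrow> (\<forall>v\<in>verts H. \<exists>y. {v, y} \<in> edges H)"

lemma noiso_img:
  assumes "noiso H" "v \<in> g ` verts H"
  shows "\<exists>y. {v, y} \<in> image g ` edges H"
proof -
  obtain u where u: "v = g u" "u \<in> verts H" using assms(2) by (rule imageE)
  then obtain y where "{u, y} \<in> edges H" using assms(1)[unfolded noiso_def] by blast
  then have "g ` {u,y} \<in> image g ` edges H" by blast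
  then show ?thesis using u by auto
qed

lemma coal_noiso:
  assumes "coalescence Hs G" "\<forall>H\<in>set Hs. noiso H"
  shows "noiso G"
  using assms
proof (induction rule: coalescence.induct)
  case (base G H)
  from base.hyps[unfolded graph_iso_def] obtain g where g: "bij_betw g (verts H) (verts G)" "edges G = image g ` edges H"
    by (elim exE conjE) (rule that; assumption)
  have vG: "verts G = g ` verts H" using bij_betw_imp_surj_on[OF g(1)] by simp
  show ?case unfolding noiso_def using noiso_img[of H _ g] base g vG by simp
next
  case (step Hs H G Hk)
  from step.hyps(2)[unfolded coalescence2_def] obtain f1 f2 where c: "verts G = f1 ` verts H \<union> f2 ` verts Hk"
    "edges G = (image f1) ` edges H \<union> (image f2) ` edges Hk"
    by (elim exE conjE) (rule that; assumption)
  have "noiso H" using step.IH step.prems by simp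
  have "noiso Hk" using step.prems by simp
  show ?case unfolding noiso_def
  proof
    fix v assume "v \<in> verts G"
    then have "v \<in> f1 ` verts H \<or> v \<in> f2 ` verts Hk" using c by simp
    then show "\<exists>y. {v, y} \<in> edges G"
    proof
      assume "v \<in> f1 ` verts H"
      then obtain y where "{v, y} \<in> image f1 ` edges H" using noiso_img[of H v f1] \<open>noiso H\<close> by blast
      then have "{v, y} \<in> edges G" using c(2) by simp
      then show ?thesis by blast
    next
      assume "v \<in> f2 ` verts Hk"
      then obtain y where "{v, y} \<in> image f2 ` edges Hk" using noiso_img[of Hk v f2] \<open>noiso Hk\<close> by blast
      then have "{v, y} \<in> edges G" using c(2) by simp
      then show ?thesis by blast
    qed
  qed
qed

lemma conn_noiso:
  assumes "wf_graph H" "connected_graph H" "edges H \<noteq> {}"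
  shows "noiso H"
  unfolding noiso_def
proof
  fix v assume v: "v \<in> verts H"
  obtain e where eH: "e \<in> edges H" using assms(3) by blast
  obtain p q where pq: "p \<noteq> q" "p \<in> verts H" "q \<in> verts H" "e = {p, q}"
    using wf_edge[OF assms(1) eH] by (elim exE conjE) (rule that; assumption)
  define z where "z = (if v = p then q else p)"
  have z: "z \<in> verts H" "z \<noteq> v" unfolding z_def using pq by auto
  have "(adj H)\<^sup>*\<^sup>* v z" using assms(2)[unfolded connected_graph_def] v z by blast
  then show "\<exists>y. {v, y} \<in> edges H"
  proof (cases rule: converse_rtranclpE)
    case base then show ?thesis using z by simp
  next
    case (step y) then show ?thesis unfolding adj_def by blast
  qed
qed

lemma wf_sub: "wf_graph H \<Longrightarrow> e \<in> edges H \<Longrightarrow> e \<subseteq> verts H"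
proof -
  assume w: "wf_graph H" and e: "e \<in> edges H"
  obtain u v where "u \<noteq> v" "u \<in> verts H" "v \<in> verts H" "e = {u, v}"
    using wf_edge[OF w e] by (elim exE conjE) (rule that; assumption)
  then show "e \<subseteq> verts H" by simp
qed

lemma nbr:
  assumes w: "wf_graph H" and e: "{u, y} \<in> edges H"
  shows "u \<noteq> y \<and> u \<in> verts H \<and> y \<in> verts H"
proof -
  obtain p q where pq: "p \<noteq> q" "p \<in> verts H" "q \<in> verts H" "{u, y} = {p, q}"
    using wf_edge[OF w e] by (elim exE conjE) (rule that; assumption)
  then have "(u = p \<and> y = q) \<or> (u = q \<and> y = p)" by (simp add: doubleton_eq_iff)
  then show ?thesis using pq by auto
qed

lemma coal_pres_down:
  assumes "coalescence Hs G" "\<forall>H\<in>set Hs. wf_graph H" "f 0 = 0" "preserves_pos f G"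
  shows "\<forall>H\<in>set Hs. preserves_pos f H"
  using assms(1,2,4)
proof (induction rule: coalescence.induct)
  case (base G H)
  from base.hyps[unfolded graph_iso_def] obtain g where g: "bij_betw g (verts H) (verts G)" "edges G = image g ` edges H"
    by (elim exE conjE) (rule that; assumption)
  have wH: "wf_graph H" using base.prems by simp
  have vG: "g ` verts H = verts G" using bij_betw_imp_surj_on[OF g(1)] .
  have inj: "inj_on g (verts H)" using bij_betw_imp_inj_on[OF g(1)] .
  have fG: "finite (verts G)" using wf_finite[OF wH] vG by (metis finite_imageI)
  have "preserves_pos f H"
  proof (rule emb[where G=G and H=H and g=g])
    show "finite (verts G)" by (rule fG)
    show "f 0 = 0" by (rule assms(3))
    show "inj_on g (verts H)" by (rule inj)
    show "preserves_pos f G" using base.prems by simp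
    show "g ` verts H \<subseteq> verts G" using vG by simp
    show "\<forall>e\<in>edges H. g ` e \<in> edges G" using g(2) by simp
  qed
  then show ?case by simp
next
  case (step Hs H G Hk)
  have wH: "wf_graph H" using coal_wf[OF step.hyps(1)] step.prems by simp
  have wK: "wf_graph Hk" using step.prems by simp
  from step.hyps(2)[unfolded coalescence2_def] obtain f1 f2 where c: "inj_on f1 (verts H)" "inj_on f2 (verts Hk)"
    "verts G = f1 ` verts H \<union> f2 ` verts Hk"
    "edges G = (image f1) ` edges H \<union> (image f2) ` edges Hk"
    by (elim exE conjE) (rule that; assumption)
  have fG: "finite (verts G)" using wf_finite[OF wH] wf_finite[OF wK] c(3) by simp
  have pG: "preserves_pos f G" using step.prems by simp
  have pH: "preserves_pos f H"
  proof (rule emb[where G=G and H=H and g=f1, OF fG pG assms(3) c(1)])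
    show "f1 ` verts H \<subseteq> verts G" using c(3) by simp
    show "\<forall>e\<in>edges H. f1 ` e \<in> edges G" using c(4) by simp
  qed
  have pK: "preserves_pos f Hk"
  proof (rule emb[where G=G and H=Hk and g=f2, OF fG pG assms(3) c(2)])
    show "f2 ` verts Hk \<subseteq> verts G" using c(3) by simp
    show "\<forall>e\<in>edges Hk. f2 ` e \<in> edges G" using c(4) by simp
  qed
  have "\<forall>H\<in>set Hs. preserves_pos f H" using step.IH step.prems pH by simp
  then show ?case using pK by simp
qed

lemma coal_pres_up:
  assumes "coalescence Hs G" "\<forall>H\<in>set Hs. wf_graph H" "f 0 = 0" "superadditive_nonneg f"
    "\<forall>H\<in>set Hs. preserves_pos f H"
  shows "preserves_pos f G"
  using assms(1,2,5)
proof (induction rule: coalescence.induct)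
  case (base G H)
  from base.hyps[unfolded graph_iso_def] obtain g where g: "bij_betw g (verts H) (verts G)" "edges G = image g ` edges H"
    by (elim exE conjE) (rule that; assumption)
  have wH: "wf_graph H" using base.prems by simp
  have vG: "verts G = g ` verts H" using bij_betw_imp_surj_on[OF g(1)] by simp
  have inj: "inj_on g (verts H)" using bij_betw_imp_inj_on[OF g(1)] .
  show ?case
  proof (rule img_pres[where H=H and g=g and G=G])
    show "finite (verts H)" by (rule wf_finite[OF wH])
    show "inj_on g (verts H)" by (rule inj)
    show "f 0 = 0" by (rule assms(3))
    show "verts G = g ` verts H" by (rule vG)
    show "edges G = image g ` edges H" by (rule g(2))
    show "\<forall>e\<in>edges H. e \<subseteq> verts H" using wf_sub[OF wH] by blast
    show "preserves_pos f H" using base.prems by simp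
  qed
next
  case (step Hs H G Hk)
  have wH: "wf_graph H" using coal_wf[OF step.hyps(1)] step.prems by simp
  have wK: "wf_graph Hk" using step.prems by simp
  have pH: "preserves_pos f H" using step.IH step.prems by simp
  have pK: "preserves_pos f Hk" using step.prems by simp
  from step.hyps(2)[unfolded coalescence2_def] obtain f1 f2 where c: "inj_on f1 (verts H)" "inj_on f2 (verts Hk)"
    "verts G = f1 ` verts H \<union> f2 ` verts Hk"
    "card (f1 ` verts H \<inter> f2 ` verts Hk) = 1"
    "edges G = (image f1) ` edges H \<union> (image f2) ` edges Hk"
    by (elim exE conjE) (rule that; assumption)
  obtain cc where cc: "f1 ` verts H \<inter> f2 ` verts Hk = {cc}" using c(4) by (rule card_1_singletonE)
  have pA: "preserves_pos f (f1 ` verts H, image f1 ` edges H)"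
  proof (rule img_pres[where H=H and g=f1, OF wf_finite[OF wH] _ c(1) pH assms(3)])
    show "\<forall>e\<in>edges H. e \<subseteq> verts H" using wf_sub[OF wH] by blast
  qed (simp_all add: verts_def edges_def)
  have pB: "preserves_pos f (f2 ` verts Hk, image f2 ` edges Hk)"
  proof (rule img_pres[where H=Hk and g=f2, OF wf_finite[OF wK] _ c(2) pK assms(3)])
    show "\<forall>e\<in>edges Hk. e \<subseteq> verts Hk" using wf_sub[OF wK] by blast
  qed (simp_all add: verts_def edges_def)
  show ?case
  proof (rule block[where A="f1 ` verts H" and B="f2 ` verts Hk", OF _ _ cc c(3) c(5) _ _ pA pB assms(3,4)])
    show "finite (f1 ` verts H)" using wf_finite[OF wH] by simp
    show "finite (f2 ` verts Hk)" using wf_finite[OF wK] by simp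
    show "\<forall>e\<in>image f1 ` edges H. e \<subseteq> f1 ` verts H"
    proof
      fix e assume "e \<in> image f1 ` edges H"
      then obtain e0 where e0: "e0 \<in> edges H" "e = f1 ` e0" by (rule imageE)
      then show "e \<subseteq> f1 ` verts H" using wf_sub[OF wH e0(1)] by auto
    qed
    show "\<forall>e\<in>image f2 ` edges Hk. e \<subseteq> f2 ` verts Hk"
    proof
      fix e assume "e \<in> image f2 ` edges Hk"
      then obtain e0 where e0: "e0 \<in> edges Hk" "e = f2 ` e0" by (rule imageE)
      then show "e \<subseteq> f2 ` verts Hk" using wf_sub[OF wK e0(1)] by auto
    qed
  qed
qed

lemma adj_sym: "adj G i j \<longleftrightarrow> adj G j i"
  unfolding adj_def by (simp add: insert_commute)

lemma coal_P3:
  assumes co: "coalescence Gs G" and len: "length Gs > 1"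
    and hyp: "\<forall>H\<in>set Gs. wf_graph H \<and> connected_graph H \<and> edges H \<noteq> {}"
  shows "\<exists>a b c. a \<in> verts G \<and> b \<in> verts G \<and> c \<in> verts G \<and> a \<noteq> b \<and> a \<noteq> c \<and> b \<noteq> c \<and>
           adj G a c \<and> adj G c b \<and> \<not> adj G a b"
  using co
proof (cases rule: coalescence.cases)
  case (base H) then show ?thesis using len by simp
next
  case (step Hs H Hk)
  have wfs: "\<forall>H'\<in>set Hs. wf_graph H'" using hyp step(1) by simp
  have nis: "\<forall>H'\<in>set Hs. noiso H'"
  proof
    fix H' assume "H' \<in> set Hs"
    then have "wf_graph H' \<and> connected_graph H' \<and> edges H' \<noteq> {}" using hyp step(1) by simp
    then show "noiso H'" using conn_noiso by blast
  qed
  have wH: "wf_graph H" by (rule coal_wf[OF step(2) wfs])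
  have nH: "noiso H" by (rule coal_noiso[OF step(2) nis])
  have hk: "wf_graph Hk \<and> connected_graph Hk \<and> edges Hk \<noteq> {}" using hyp step(1) by simp
  then have wK: "wf_graph Hk" by simp
  have nK: "noiso Hk" using conn_noiso hk by blast
  from step(3)[unfolded coalescence2_def] obtain f1 f2 where c: "inj_on f1 (verts H)" "inj_on f2 (verts Hk)"
    "verts G = f1 ` verts H \<union> f2 ` verts Hk"
    "card (f1 ` verts H \<inter> f2 ` verts Hk) = 1"
    "edges G = (image f1) ` edges H \<union> (image f2) ` edges Hk"
    by (elim exE conjE) (rule that; assumption)
  obtain cc where cc: "f1 ` verts H \<inter> f2 ` verts Hk = {cc}" using c(4) by (rule card_1_singletonE)
  have ccA: "cc \<in> f1 ` verts H" and ccB: "cc \<in> f2 ` verts Hk" using cc by auto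
  obtain u where u: "cc = f1 u" "u \<in> verts H" using ccA by (rule imageE)
  obtain w where w: "cc = f2 w" "w \<in> verts Hk" using ccB by (rule imageE)
  obtain y where y: "{u, y} \<in> edges H" using nH u(2) unfolding noiso_def by blast
  obtain z where z: "{w, z} \<in> edges Hk" using nK w(2) unfolding noiso_def by blast
  have uy: "u \<noteq> y" "y \<in> verts H" using nbr[OF wH y] by auto
  have wz: "w \<noteq> z" "z \<in> verts Hk" using nbr[OF wK z] by auto
  define a where "a = f1 y"
  define b where "b = f2 z"
  have aA: "a \<in> f1 ` verts H" unfolding a_def using uy by simp
  have bB: "b \<in> f2 ` verts Hk" unfolding b_def using wz by simp
  have ac: "a \<noteq> cc" unfolding a_def u(1) using c(1) uy u(2) by (simp add: inj_on_eq_iff)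
  have bc: "b \<noteq> cc" unfolding b_def w(1) using c(2) wz w(2) by (simp add: inj_on_eq_iff)
  have aB: "a \<notin> f2 ` verts Hk"
  proof
    assume "a \<in> f2 ` verts Hk"
    then have "a \<in> {cc}" using aA cc by blast
    then show False using ac by simp
  qed
  have bA: "b \<notin> f1 ` verts H"
  proof
    assume "b \<in> f1 ` verts H"
    then have "b \<in> {cc}" using bB cc by blast
    then show False using bc by simp
  qed
  have ab: "a \<noteq> b" using aA bA by auto
  have eqA: "{a, cc} = f1 ` {u, y}" unfolding a_def u(1) by (simp add: insert_commute)
  have e1: "f1 ` {u, y} \<in> image f1 ` edges H" using y by (rule imageI)
  have "{a, cc} \<in> edges G" unfolding c(5) eqA by (rule UnI1[OF e1])
  then have adj1: "adj G a cc" unfolding adj_def .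
  have eqB: "{cc, b} = f2 ` {w, z}" unfolding b_def w(1) by simp
  have e2: "f2 ` {w, z} \<in> image f2 ` edges Hk" using z by (rule imageI)
  have "{cc, b} \<in> edges G" unfolding c(5) eqB by (rule UnI2[OF e2])
  then have adj2: "adj G cc b" unfolding adj_def .
  have nadj: "\<not> adj G a b"
  proof
    assume "adj G a b"
    then have "{a, b} \<in> image f1 ` edges H \<union> image f2 ` edges Hk" using c(5) unfolding adj_def by simp
    then show False
    proof
      assume "{a, b} \<in> image f1 ` edges H"
      then obtain e0 where e0: "e0 \<in> edges H" "{a, b} = f1 ` e0" by (rule imageE)
      have "b \<in> f1 ` e0" using e0(2) by (metis insertI1 insert_commute)
      then have "b \<in> f1 ` verts H" using wf_sub[OF wH e0(1)] by blast
      then show False using bA by simp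
    next
      assume "{a, b} \<in> image f2 ` edges Hk"
      then obtain e0 where e0: "e0 \<in> edges Hk" "{a, b} = f2 ` e0" by (rule imageE)
      have "a \<in> f2 ` e0" using e0(2) by (metis insertI1)
      then have "a \<in> f2 ` verts Hk" using wf_sub[OF wK e0(1)] by blast
      then show False using aB by simp
    qed
  qed
  have "a \<in> verts G" "b \<in> verts G" "cc \<in> verts G" using aA bB ccA c(3) by auto
  then show ?thesis using ab ac bc adj1 adj2 nadj by blast
qed

lemma two_by_two:
  fixes p q r :: real
  assumes h: "\<forall>u v. 0 \<le> u^2 * p + 2 * u * v * r + v^2 * q"
  shows "0 \<le> p" "r^2 \<le> p * q"
proof -
  show p0: "0 \<le> p" using h[rule_format, of 1 0] by simp
  have q0: "0 \<le> q" using h[rule_format, of 0 1] by simp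
  show "r^2 \<le> p * q"
  proof (cases "p = 0")
    case False
    then have pp: "p > 0" using p0 by simp
    have "0 \<le> r^2 * p + 2 * r * (-p) * r + (-p)^2 * q" using h[rule_format, of r "-p"] .
    then have "0 \<le> p * (p * q - r^2)" by (simp add: algebra_simps power2_eq_square)
    then have "0 \<le> p * q - r^2" using pp by (simp add: zero_le_mult_iff)
    then show ?thesis by simp
  next
    case True
    have "r = 0"
    proof (rule ccontr)
      assume r: "r \<noteq> 0"
      have "0 \<le> (-(q+1)/(2*r))^2 * p + 2 * (-(q+1)/(2*r)) * 1 * r + 1^2 * q"
        using h[rule_format, of "-(q+1)/(2*r)" 1] .
      also have "\<dots> = -1" using True r by (simp add: field_simps)
      finally show False by simp
    qed
    then show ?thesis using True by simp
  qed
qed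

lemma P3_sa:
  fixes G :: "'a sgraph" and f :: "real \<Rightarrow> real"
  assumes fG: "finite (verts G)" and V: "a \<in> verts G" "b \<in> verts G" "c \<in> verts G"
    and d: "a \<noteq> b" "a \<noteq> c" "b \<noteq> c"
    and ac: "adj G a c" and cb: "adj G c b" and nab: "\<not> adj G a b"
    and pG: "preserves_pos f G" and f0: "f 0 = 0"
  shows "superadditive_nonneg f"
  unfolding superadditive_nonneg_def
proof (intro allI impI)
  fix x y :: real assume x: "0 \<le> x" and y: "0 \<le> y"
  define ua where "ua = (\<lambda>i. if i = a \<or> i = c then 1 else (0::real))"
  define ub where "ub = (\<lambda>i. if i = c \<or> i = b then 1 else (0::real))"
  define M where "M = (\<lambda>i j. x * ua i * ua j + y * ub i * ub j)"
  have za: "ua i * ua j = 0" if "i \<noteq> j" "\<not> adj G i j" for i j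
  proof (cases "(i = a \<or> i = c) \<and> (j = a \<or> j = c)")
    case True
    then have "(i = a \<and> j = c) \<or> (i = c \<and> j = a)" using that(1) by blast
    then have "adj G i j" using ac adj_sym[of G a c] by blast
    then show ?thesis using that(2) by simp
  next
    case False then show ?thesis unfolding ua_def by auto
  qed
  have zb: "ub i * ub j = 0" if "i \<noteq> j" "\<not> adj G i j" for i j
  proof (cases "(i = c \<or> i = b) \<and> (j = c \<or> j = b)")
    case True
    then have "(i = c \<and> j = b) \<or> (i = b \<and> j = c)" using that(1) by blast
    then have "adj G i j" using cb adj_sym[of G c b] by blast
    then show ?thesis using that(2) by simp
  next
    case False then show ?thesis unfolding ub_def by auto
  qed
  have inM: "in_PG G M"
    unfolding in_PG_def psd_on_quad
  proof (intro conjI ballI allI impI)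
    fix i j show "M i j = M j i" unfolding M_def by (simp add: algebra_simps)
  next
    fix v :: "'a \<Rightarrow> real"
    have "quad (verts G) M v = quad (verts G) (\<lambda>i j. x * ua i * ua j) v + quad (verts G) (\<lambda>i j. y * ub i * ub j) v"
      unfolding M_def by (rule quad_add)
    also have "\<dots> = x * (\<Sum>i\<in>verts G. v i * ua i)^2 + y * (\<Sum>i\<in>verts G. v i * ub i)^2"
      by (simp add: quad_rank1)
    finally show "0 \<le> quad (verts G) M v" using x y by simp
  next
    fix i j assume "i \<in> verts G" "j \<in> verts G" "i \<noteq> j \<and> \<not> adj G i j"
    then have h1: "ua i * ua j = 0" and h2: "ub i * ub j = 0" using za[of i j] zb[of i j] by auto
    have "M i j = x * (ua i * ua j) + y * (ub i * ub j)" unfolding M_def by (simp add: mult.assoc)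
    then show "M i j = 0" using h1 h2 by simp
  qed
  then have "in_PG G (\<lambda>i j. f (M i j))" using pG unfolding preserves_pos_def by blast
  then have ps: "psd_on (verts G) (\<lambda>i j. f (M i j))" unfolding in_PG_def by blast
  define z where "z = (\<lambda>i. if i = a then 1 else if i = c then -1 else if i = b then 1 else (0::real))"
  have "0 \<le> quad (verts G) (\<lambda>i j. f (M i j)) z" using ps unfolding psd_on_quad by blast
  also have "quad (verts G) (\<lambda>i j. f (M i j)) z = quad {a, b, c} (\<lambda>i j. f (M i j)) z"
    by (rule quad_restrict[OF fG]) (use V in \<open>auto simp: z_def\<close>)
  also have "\<dots> = f (x + y) - f x - f y"
    unfolding quad_def z_def M_def ua_def ub_def using d f0 by (simp add: algebra_simps)
  finally show "f x + f y \<le> f (x + y)" by simp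
qed

lemma edge_K2:
  fixes G :: "'a sgraph" and f :: "real \<Rightarrow> real"
  assumes fG: "finite (verts G)" and V: "a \<in> verts G" "c \<in> verts G"
    and d: "a \<noteq> c" and ac: "adj G a c"
    and pG: "preserves_pos f G" and f0: "f 0 = 0" and A: "0 \<le> A" and B: "0 \<le> B"
  shows "\<forall>u v. 0 \<le> u^2 * f A + 2 * u * v * f (sqrt A * sqrt B) + v^2 * f B"
proof (intro allI)
  fix u v :: real
  define w where "w = (\<lambda>i. if i = a then sqrt A else if i = c then sqrt B else (0::real))"
  define M where "M = (\<lambda>i j. 1 * w i * w j)"
  have zw: "w i * w j = 0" if "i \<noteq> j" "\<not> adj G i j" for i j
  proof (cases "(i = a \<or> i = c) \<and> (j = a \<or> j = c)")
    case True
    then have "(i = a \<and> j = c) \<or> (i = c \<and> j = a)" using that(1) by blast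
    then have "adj G i j" using ac adj_sym[of G a c] by blast
    then show ?thesis using that(2) by simp
  next
    case False then show ?thesis unfolding w_def by auto
  qed
  have inM: "in_PG G M"
    unfolding in_PG_def psd_on_quad
  proof (intro conjI ballI allI impI)
    fix i j show "M i j = M j i" unfolding M_def by (simp add: algebra_simps)
  next
    fix v :: "'a \<Rightarrow> real"
    show "0 \<le> quad (verts G) M v" unfolding M_def quad_rank1 by simp
  next
    fix i j assume "i \<in> verts G" "j \<in> verts G" "i \<noteq> j \<and> \<not> adj G i j"
    then show "M i j = 0" unfolding M_def using zw[of i j] by simp
  qed
  then have "in_PG G (\<lambda>i j. f (M i j))" using pG unfolding preserves_pos_def by blast
  then have ps: "psd_on (verts G) (\<lambda>i j. f (M i j))" unfolding in_PG_def by blast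
  define z where "z = (\<lambda>i. if i = a then u else if i = c then v else (0::real))"
  have "0 \<le> quad (verts G) (\<lambda>i j. f (M i j)) z" using ps unfolding psd_on_quad by blast
  also have "quad (verts G) (\<lambda>i j. f (M i j)) z = quad {a, c} (\<lambda>i j. f (M i j)) z"
    by (rule quad_restrict[OF fG]) (use V in \<open>auto simp: z_def\<close>)
  also have "\<dots> = u^2 * f A + 2 * u * v * f (sqrt A * sqrt B) + v^2 * f B"
    unfolding quad_def z_def M_def w_def using d A B by (simp add: algebra_simps power2_eq_square)
  finally show "0 \<le> u^2 * f A + 2 * u * v * f (sqrt A * sqrt B) + v^2 * f B" .
qed

lemma main_char:
  fixes Gs :: "'a sgraph list" and G :: "'a sgraph" and f :: "real \<Rightarrow> real"
  assumes len: "length Gs > 1"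
    and hyp: "\<forall>H\<in>set Gs. wf_graph H \<and> connected_graph H \<and> edges H \<noteq> {}"
    and co: "coalescence Gs G"
    and f0: "f 0 = 0"
  shows "preserves_pos f G \<longleftrightarrow>
            (\<forall>H\<in>set Gs. preserves_pos f H) \<and> continuous_on {0..} f \<and> superadditive_nonneg f"
proof -
  have wfs: "\<forall>H\<in>set Gs. wf_graph H" using hyp by blast
  have fG: "finite (verts G)" using coal_wf[OF co wfs] by (rule wf_finite)
  obtain a b c where P: "a \<in> verts G" "b \<in> verts G" "c \<in> verts G" "a \<noteq> b" "a \<noteq> c" "b \<noteq> c"
    "adj G a c" "adj G c b" "\<not> adj G a b"
    using coal_P3[OF co len hyp] by (elim exE conjE) (rule that; assumption)
  show ?thesis
  proof
    assume pG: "preserves_pos f G"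
    have sa: "superadditive_nonneg f" by (rule P3_sa[OF fG P pG f0])
    have K: "\<forall>u v. 0 \<le> u^2 * f A + 2 * u * v * f (sqrt A * sqrt B) + v^2 * f B"
      if "0 \<le> A" "0 \<le> B" for A B
      by (rule edge_K2[OF fG P(1) P(3) P(5) P(7) pG f0 that])
    have nn: "\<forall>x\<ge>0. 0 \<le> f x"
    proof (intro allI impI)
      fix x :: real assume "0 \<le> x"
      then show "0 \<le> f x" using two_by_two(1)[OF K[of x 0]] by simp
    qed
    have gm: "\<forall>a b m. 0 \<le> a \<longrightarrow> 0 \<le> b \<longrightarrow> 0 \<le> m \<longrightarrow> m * m = a * b \<longrightarrow> (f m)^2 \<le> f a * f b"
    proof (intro allI impI)
      fix a b m :: real assume h: "0 \<le> a" "0 \<le> b" "0 \<le> m" "m * m = a * b"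
      have "sqrt a * sqrt b = sqrt (m * m)" using h(4) by (simp add: real_sqrt_mult)
      also have "\<dots> = m" using h(3) by simp
      finally have sm: "sqrt a * sqrt b = m" .
      show "(f m)^2 \<le> f a * f b" using two_by_two(2)[OF K[OF h(1) h(2)]] sm by simp
    qed
    have cont: "continuous_on {0..} f" by (rule cont_from[OF f0 nn sa gm])
    have "\<forall>H\<in>set Gs. preserves_pos f H" by (rule coal_pres_down[OF co wfs f0 pG])
    then show "(\<forall>H\<in>set Gs. preserves_pos f H) \<and> continuous_on {0..} f \<and> superadditive_nonneg f"
      using cont sa by simp
  next
    assume "(\<forall>H\<in>set Gs. preserves_pos f H) \<and> continuous_on {0..} f \<and> superadditive_nonneg f"
    then show "preserves_pos f G" using coal_pres_up[where f=f, OF co wfs f0] by blast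
  qed
qed

lemma powr_sa:
  fixes x y \<alpha> :: real
  assumes a: "1 \<le> \<alpha>" and x: "0 \<le> x" and y: "0 \<le> y"
  shows "x powr \<alpha> + y powr \<alpha> \<le> (x + y) powr \<alpha>"
proof (cases "x + y = 0")
  case True then have "x = 0" "y = 0" using x y by auto
  then show ?thesis by simp
next
  case False
  define s where "s = x + y"
  have sp: "s > 0" unfolding s_def using False x y by simp
  have bx: "(x / s) powr \<alpha> \<le> (x / s) powr 1" using a x y sp unfolding s_def
    by (intro powr_mono') (auto simp: field_simps)
  have by': "(y / s) powr \<alpha> \<le> (y / s) powr 1" using a x y sp unfolding s_def
    by (intro powr_mono') (auto simp: field_simps)
  have ex: "x powr \<alpha> = (x / s) powr \<alpha> * s powr \<alpha>"
    using sp by (simp add: powr_mult[symmetric])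
  have ey: "y powr \<alpha> = (y / s) powr \<alpha> * s powr \<alpha>"
    using sp by (simp add: powr_mult[symmetric])
  have sa: "s powr \<alpha> \<ge> 0" by simp
  have "x powr \<alpha> + y powr \<alpha> \<le> (x / s) * s powr \<alpha> + (y / s) * s powr \<alpha>"
    unfolding ex ey using bx by' x y sp sa
    by (intro add_mono mult_right_mono) (auto simp: powr_one_gt_zero_iff)
  also have "\<dots> = ((x + y) / s) * s powr \<alpha>" by (simp add: add_divide_distrib ring_distribs)
  also have "\<dots> = s powr \<alpha>" using sp unfolding s_def by simp
  finally show ?thesis unfolding s_def .
qed

lemma pow_char:
  fixes g :: "real \<Rightarrow> real"
  assumes gp: "\<forall>x\<ge>0. g x = x powr \<alpha>" and g0: "g 0 = 0"
  shows "(continuous_on {0..} g \<and> superadditive_nonneg g) \<longleftrightarrow> 1 \<le> \<alpha>"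
proof
  assume "continuous_on {0..} g \<and> superadditive_nonneg g"
  then have "g 1 + g 1 \<le> g (1 + 1)" unfolding superadditive_nonneg_def by (meson zero_le_one)
  moreover have "g 1 = 1" "g (1 + 1) = 2 powr \<alpha>" using gp by simp_all
  ultimately have "2 powr 1 \<le> (2::real) powr \<alpha>" by simp
  then show "1 \<le> \<alpha>" using powr_le_cancel_iff[of 2 1 \<alpha>] by simp
next
  assume a: "1 \<le> \<alpha>"
  have sa: "superadditive_nonneg g" unfolding superadditive_nonneg_def
    using powr_sa[OF a] gp by simp
  have nn: "\<forall>x\<ge>0. 0 \<le> g x" using gp by simp
  have gm: "\<forall>a b m. 0 \<le> a \<longrightarrow> 0 \<le> b \<longrightarrow> 0 \<le> m \<longrightarrow> m * m = a * b \<longrightarrow> (g m)^2 \<le> g a * g b"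
  proof (intro allI impI)
    fix a b m :: real assume h: "0 \<le> a" "0 \<le> b" "0 \<le> m" "m * m = a * b"
    have "(m powr \<alpha>)^2 = (m * m) powr \<alpha>" by (simp add: powr_mult power2_eq_square)
    also have "\<dots> = a powr \<alpha> * b powr \<alpha>" using h(4) by (simp add: powr_mult)
    finally show "(g m)^2 \<le> g a * g b" using gp h by simp
  qed
  have "continuous_on {0..} g" by (rule cont_from[OF g0 nn sa gm])
  then show "continuous_on {0..} g \<and> superadditive_nonneg g" using sa by simp
qed

lemma psi_nonneg: "0 \<le> x \<Longrightarrow> psi \<alpha> x = x powr \<alpha>"
  unfolding psi_def by auto

lemma phi_nonneg: "0 \<le> x \<Longrightarrow> phi \<alpha> x = x powr \<alpha>"
  unfolding phi_def by auto

theorem proposition4p11: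
  fixes Gs :: "'a sgraph list" and G :: "'a sgraph" and f :: "real \<Rightarrow> real"
  assumes "length Gs > 1"
    and "\<forall>H\<in>set Gs. wf_graph H \<and> connected_graph H \<and> edges H \<noteq> {}"
    and "coalescence Gs G"
    and "f 0 = 0"
  shows "(preserves_pos f G \<longleftrightarrow>
            (\<forall>H\<in>set Gs. preserves_pos f H) \<and> continuous_on {0..} f \<and> superadditive_nonneg f)
       \<and> H_psi G = {1..} \<inter> (\<Inter>H\<in>set Gs. H_psi H)
       \<and> H_phi G = {1..} \<inter> (\<Inter>H\<in>set Gs. H_phi H)"
proof (intro conjI)
  show "preserves_pos f G \<longleftrightarrow>
            (\<forall>H\<in>set Gs. preserves_pos f H) \<and> continuous_on {0..} f \<and> superadditive_nonneg f"
    by (rule main_char[where f=f, OF assms])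
  show "H_psi G = {1..} \<inter> (\<Inter>H\<in>set Gs. H_psi H)"
  proof (rule set_eqI)
    fix \<alpha> :: real
    have c: "preserves_pos (psi \<alpha>) G \<longleftrightarrow> (\<forall>H\<in>set Gs. preserves_pos (psi \<alpha>) H) \<and>
        continuous_on {0..} (psi \<alpha>) \<and> superadditive_nonneg (psi \<alpha>)"
      by (rule main_char[where f="psi \<alpha>", OF assms(1-3)]) (simp add: psi_def)
    have p: "(continuous_on {0..} (psi \<alpha>) \<and> superadditive_nonneg (psi \<alpha>)) \<longleftrightarrow> 1 \<le> \<alpha>"
      by (rule pow_char) (auto simp: psi_nonneg psi_def)
    show "\<alpha> \<in> H_psi G \<longleftrightarrow> \<alpha> \<in> {1..} \<inter> (\<Inter>H\<in>set Gs. H_psi H)"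
      unfolding H_psi_def using c p by auto
  qed
  show "H_phi G = {1..} \<inter> (\<Inter>H\<in>set Gs. H_phi H)"
  proof (rule set_eqI)
    fix \<alpha> :: real
    have c: "preserves_pos (phi \<alpha>) G \<longleftrightarrow> (\<forall>H\<in>set Gs. preserves_pos (phi \<alpha>) H) \<and>
        continuous_on {0..} (phi \<alpha>) \<and> superadditive_nonneg (phi \<alpha>)"
      by (rule main_char[where f="phi \<alpha>", OF assms(1-3)]) (simp add: phi_def)
    have p: "(continuous_on {0..} (phi \<alpha>) \<and> superadditive_nonneg (phi \<alpha>)) \<longleftrightarrow> 1 \<le> \<alpha>"
      by (rule pow_char) (auto simp: phi_nonneg phi_def)
    show "\<alpha> \<in> H_phi G \<longleftrightarrow> \<alpha> \<in> {1..} \<inter> (\<Inter>H\<in>set Gs. H_phi H)"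
      unfolding H_phi_def using c p by auto
  qed
qed

end
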